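(* Let $0<m<L$, $\kappa=L/m$, $\delta\in(0,1)$, and suppose \[ \max(\alpha_-,0)<\alpha\le\frac{2}{(1+\delta)L+(1-\delta)m},\qquad \alpha_-:=\frac{1}{1-\delta}\left(\frac{2}{L+m}-\frac{\delta}{m}\right). \] Set $\rho_\star=1-\alpha m(1-\delta)$ and \[ \gamma_\star=\frac{\rho_\star\big(\kappa-1+(\kappa+1)(\delta-\rho_\star)\big)}{(\kappa-(1-\delta))\,\delta}. \] Then $0<\gamma_\star<\rho_\star^2$. *)

theory Defs
  imports Complex_Main
begin

end

theory Submission
  imports Defs
begin

theorem lemma3p3:
  fixes m L \<kappa> \<delta> \<alpha> \<alpha>\<^sub>m \<rho> \<gamma> :: real
  assumes "0 < m" and "m < L"
    and "\<kappa> = L / m"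
    and "0 < \<delta>" and "\<delta> < 1"
    and "\<alpha>\<^sub>m = (1 / (1 - \<delta>)) * (2 / (L + m) - \<delta> / m)"
    and "max \<alpha>\<^sub>m 0 < \<alpha>"
    and "\<alpha> \<le> 2 / ((1 + \<delta>) * L + (1 - \<delta>) * m)"
    and "\<rho> = 1 - \<alpha> * m * (1 - \<delta>)"
    and "\<gamma> = \<rho> * (\<kappa> - 1 + (\<kappa> + 1) * (\<delta> - \<rho>)) / ((\<kappa> - (1 - \<delta>)) * \<delta>)"
  shows "0 < \<gamma> \<and> \<gamma> < \<rho>\<^sup>2"
proof -
  note A = assms
  have L: "L = \<kappa> * m" using A(1,3) by simp
  have k1: "\<kappa> > 1" using A(1,2,3) by simp
  define t where "t = \<alpha> * m * (1 - \<delta>)"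
  have "\<alpha>\<^sub>m < \<alpha>" using A(7) by simp
  hence "\<alpha>\<^sub>m * (m * (1 - \<delta>)) < \<alpha> * (m * (1 - \<delta>))"
    using A(1,5) by (intro mult_strict_right_mono) auto
  moreover have "\<alpha>\<^sub>m * (m * (1 - \<delta>)) = 2 / (\<kappa> + 1) - \<delta>"
  proof -
    have "\<alpha>\<^sub>m * (m * (1 - \<delta>)) = (2 / (L + m) - \<delta> / m) * m"
      using A(1,5,6) by simp
    also have "\<dots> = 2 * m / (L + m) - \<delta>" using A(1,2) by (simp add: left_diff_distrib)
    also have "2 * m / (L + m) = 2 / (\<kappa> + 1)"
    proof -
      have "L + m = m * (\<kappa> + 1)" unfolding L by (simp add: algebra_simps)
      thus ?thesis using A(1) by simp
    qed
    finally show ?thesis .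
  qed
  ultimately have t1: "t > 2 / (\<kappa> + 1) - \<delta>" unfolding t_def by (simp add: mult.assoc)
  have D: "(1 + \<delta>) * \<kappa> + (1 - \<delta>) > 0" using A(4,5) k1 by (smt (verit) mult_pos_pos)
  have "\<alpha> * (m * (1 - \<delta>)) \<le> 2 / ((1 + \<delta>) * L + (1 - \<delta>) * m) * (m * (1 - \<delta>))"
    using A(1,5,8) by (intro mult_right_mono) auto
  moreover have "2 / ((1 + \<delta>) * L + (1 - \<delta>) * m) * (m * (1 - \<delta>)) = 2 * (1 - \<delta>) / ((1 + \<delta>) * \<kappa> + (1 - \<delta>))"
  proof -
    have "(1 + \<delta>) * L + (1 - \<delta>) * m = m * ((1 + \<delta>) * \<kappa> + (1 - \<delta>))"
      unfolding L by (simp add: algebra_simps)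
    thus ?thesis using A(1) D by simp
  qed
  ultimately have t2: "t * ((1 + \<delta>) * \<kappa> + (1 - \<delta>)) \<le> 2 * (1 - \<delta>)"
    unfolding t_def using D by (simp add: mult.assoc pos_le_divide_eq)
  have t1': "t * (\<kappa> + 1) > 2 - \<delta> * (\<kappa> + 1)" using t1 k1 by (simp add: field_simps)
  have r: "\<rho> = 1 - t" using A(9) t_def by simp
  have "(1 + \<delta>) * \<kappa> > 1 - \<delta>"
  proof -
    have "(1 + \<delta>) * \<kappa> > (1 + \<delta>) * 1" using k1 A(4) by (intro mult_strict_left_mono) auto
    hence "(1 + \<delta>) * \<kappa> > 1 + \<delta>" by simp
    thus ?thesis using A(4) by linarith
  qed
  hence "t * ((1 + \<delta>) * \<kappa> + (1 - \<delta>)) < 1 * ((1 + \<delta>) * \<kappa> + (1 - \<delta>))" using t2 by simp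
  hence "t < 1" using D by (simp only: mult_less_cancel_right)
  hence rpos: "\<rho> > 0" using r by simp
  have N: "\<kappa> - 1 + (\<kappa> + 1) * (\<delta> - \<rho>) > 0" using t1' unfolding r by (simp add: algebra_simps)
  have Dn: "(\<kappa> - (1 - \<delta>)) * \<delta> > 0" using k1 A(4,5) by simp
  have g1: "\<gamma> > 0" using A(10) N Dn rpos by simp
  have key: "\<kappa> - 1 + (\<kappa> + 1) * (\<delta> - \<rho>) < \<rho> * ((\<kappa> - (1 - \<delta>)) * \<delta>)"
  proof -
    have "(\<kappa> - 1 + (\<kappa> + 1) * (\<delta> - \<rho>) - \<rho> * ((\<kappa> - (1 - \<delta>)) * \<delta>)) * ((1 + \<delta>) * \<kappa> + (1 - \<delta>))
       = - (\<delta>^2 * ((1 + \<delta>) * \<kappa> - (1 - \<delta>))) + (t * ((1 + \<delta>) * \<kappa> + (1 - \<delta>)) - 2 * (1 - \<delta>)) * ((\<kappa> + 1) + \<delta> * (\<kappa> - 1 + \<delta>))"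
      unfolding r by (simp add: algebra_simps power2_eq_square)
    moreover have "\<delta>^2 * ((1 + \<delta>) * \<kappa> - (1 - \<delta>)) > 0"
      using A(4) \<open>(1 + \<delta>) * \<kappa> > 1 - \<delta>\<close> by simp
    moreover have "(t * ((1 + \<delta>) * \<kappa> + (1 - \<delta>)) - 2 * (1 - \<delta>)) * ((\<kappa> + 1) + \<delta> * (\<kappa> - 1 + \<delta>)) \<le> 0"
      using t2 A(4,5) k1 by (intro mult_nonpos_nonneg) auto
    ultimately have "(\<kappa> - 1 + (\<kappa> + 1) * (\<delta> - \<rho>) - \<rho> * ((\<kappa> - (1 - \<delta>)) * \<delta>)) * ((1 + \<delta>) * \<kappa> + (1 - \<delta>)) < 0"
      by linarith
    with D show ?thesis by (simp add: mult_less_0_iff)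
  qed
  have "\<gamma> < \<rho>^2" unfolding A(10) using Dn rpos key
    by (simp add: divide_less_eq power2_eq_square mult.assoc)
  with g1 show ?thesis by simp
qed

end
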